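(* Given a fair division instance with $3$ agents, $4$ items, and normalised additive valuations, an EQ $+$ EQ1 allocation may not exist.
   Context: Fair division of indivisible goods among agents with additive valuations $v_i$. Valuations are normalised if every agent assigns the same value to the full set of items. An (integral) allocation $A=(A_1,\dots,A_n)$ is EQ1 (equitable up to one good) if for every pair of agents $i,j$ with $A_i\neq\emptyset$ there is a good $g\in A_i$ with $v_i(A_i\setminus\{g\})\le v_j(A_j)$. An EQ $+$ EQ1 allocation is a randomized allocation (a probability distribution over integral allocations) that is ex ante equitable, i.e. all agents have equal expected value $\mathbb{E}[v_i(X_i)]$, and whose support consists only of EQ1 integral allocations. *)

theory Defs
  imports "HOL-Probability.Probability_Mass_Function"
begin

(* Agents are 0..<n, items are 0..<m. A valuation profile is v :: nat => nat => real,
  where v i g is agent i's value for item g; values of bundles are additive. *)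

definition val :: "(nat \<Rightarrow> nat \<Rightarrow> real) \<Rightarrow> nat \<Rightarrow> nat set \<Rightarrow> real" where
  "val v i S = (\<Sum>g\<in>S. v i g)"

definition nonneg_vals :: "nat \<Rightarrow> nat \<Rightarrow> (nat \<Rightarrow> nat \<Rightarrow> real) \<Rightarrow> bool" where
  "nonneg_vals n m v \<longleftrightarrow> (\<forall>i<n. \<forall>g<m. 0 \<le> v i g)"

definition normalised :: "nat \<Rightarrow> nat \<Rightarrow> (nat \<Rightarrow> nat \<Rightarrow> real) \<Rightarrow> bool" where
  "normalised n m v \<longleftrightarrow> (\<forall>i<n. \<forall>j<n. val v i {0..<m} = val v j {0..<m})"

definition is_alloc :: "nat \<Rightarrow> nat \<Rightarrow> (nat \<Rightarrow> nat) \<Rightarrow> bool" where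
  "is_alloc n m a \<longleftrightarrow> (\<forall>g<m. a g < n)"

definition bundle_of :: "nat \<Rightarrow> (nat \<Rightarrow> nat) \<Rightarrow> nat \<Rightarrow> nat set" where
  "bundle_of m a i = {g. g < m \<and> a g = i}"

definition EQ1 :: "nat \<Rightarrow> nat \<Rightarrow> (nat \<Rightarrow> nat \<Rightarrow> real) \<Rightarrow> (nat \<Rightarrow> nat) \<Rightarrow> bool" where
  "EQ1 n m v a \<longleftrightarrow> (\<forall>i<n. \<forall>j<n. bundle_of m a i \<noteq> {} \<longrightarrow>
      (\<exists>g\<in>bundle_of m a i. val v i (bundle_of m a i - {g}) \<le> val v j (bundle_of m a j)))"

definition EQ_EQ1 :: "nat \<Rightarrow> nat \<Rightarrow> (nat \<Rightarrow> nat \<Rightarrow> real) \<Rightarrow> (nat \<Rightarrow> nat) pmf \<Rightarrow> bool" where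
  "EQ_EQ1 n m v p \<longleftrightarrow>
     (\<forall>a\<in>set_pmf p. is_alloc n m a \<and> EQ1 n m v a) \<and>
     (\<forall>i<n. \<forall>j<n. measure_pmf.expectation p (\<lambda>a. val v i (bundle_of m a i))
                 = measure_pmf.expectation p (\<lambda>a. val v j (bundle_of m a j)))"

end

theory Submission
  imports Defs
begin

definition vv :: "nat \<Rightarrow> nat \<Rightarrow> real" where
  "vv i g = [[2,0,0,8],[1,4,4,1],[3,0,0,7::real]] ! i ! g"

lemma lt4: "(g::nat) < 4 \<longleftrightarrow> g = 0 \<or> g = 1 \<or> g = 2 \<or> g = 3" by auto

lemma bundle_expl:
  "bundle_of 4 a i = (if a 0 = i then {0} else {}) \<union> (if a 1 = i then {1::nat} else {})
     \<union> (if a 2 = i then {2} else {}) \<union> (if a 3 = i then {3} else {})"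
  unfolding bundle_of_def
proof (rule set_eqI)
  fix x :: nat
  show "x \<in> {g. g < 4 \<and> a g = i} \<longleftrightarrow> x \<in> (if a 0 = i then {0} else {}) \<union> (if a 1 = i then {1::nat} else {})
     \<union> (if a 2 = i then {2} else {}) \<union> (if a 3 = i then {3} else {})"
  proof (cases "x < 4")
    case True
    then have "x = 0 \<or> x = 1 \<or> x = 2 \<or> x = 3" by (simp only: lt4)
    then show ?thesis by (elim disjE) auto
  qed auto
qed

lemma EQ1_D:
  assumes "EQ1 3 4 v a" "i < 3" "j < 3" "bundle_of 4 a i \<noteq> {}"
  shows "\<exists>g\<in>bundle_of 4 a i. val v i (bundle_of 4 a i - {g}) \<le> val v j (bundle_of 4 a j)"
  using assms unfolding EQ1_def by blast

lemma key:
  assumes "is_alloc 3 4 a" "EQ1 3 4 vv a"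
  shows "1 \<le> 5 * val vv 0 (bundle_of 4 a 0) - 9 * val vv 1 (bundle_of 4 a 1)
              + 4 * val vv 2 (bundle_of 4 a 2)"
proof -
  have r: "a k = 0 \<or> a k = 1 \<or> a k = 2" if "k < 4" for k
    using assms(1) that unfolding is_alloc_def by fastforce
  have E: "\<And>i j. i < 3 \<Longrightarrow> j < 3 \<Longrightarrow> bundle_of 4 a i \<noteq> {} \<Longrightarrow>
     \<exists>g\<in>bundle_of 4 a i. val vv i (bundle_of 4 a i - {g}) \<le> val vv j (bundle_of 4 a j)"
    using EQ1_D[OF assms(2)] by blast
  from E[of 0 1] E[of 0 2] E[of 1 0] E[of 1 2] E[of 2 0] E[of 2 1]
  show ?thesis
    using r[of 0, simplified] r[of 1, simplified] r[of 2, simplified] r[of 3, simplified]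
    by (elim disjE) (simp_all add: bundle_expl val_def vv_def insert_Diff_if)
qed

lemma U_bounds:
  assumes "i < 3"
  shows "norm (val vv i (bundle_of 4 a i)) \<le> 10"
proof -
  have nn: "0 \<le> vv i g" if "g < 4" for g
  proof -
    have "i = 0 \<or> i = 1 \<or> i = 2" using assms by auto
    moreover have "g = 0 \<or> g = 1 \<or> g = 2 \<or> g = 3" using that by (simp only: lt4)
    ultimately show "0 \<le> vv i g"
      unfolding vv_def by auto
  qed
  have sub: "bundle_of 4 a i \<subseteq> {0..<4}" unfolding bundle_of_def by auto
  have "0 \<le> val vv i (bundle_of 4 a i)" unfolding val_def by (intro sum_nonneg nn) (auto simp: bundle_of_def)
  moreover have "val vv i (bundle_of 4 a i) \<le> val vv i {0..<4}"
    unfolding val_def by (intro sum_mono2 sub nn) auto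
  moreover have "val vv i {0..<4} = 10"
    using assms by (auto simp: val_def vv_def eval_nat_numeral less_Suc_eq)
  ultimately show ?thesis by simp
qed

theorem mainTheorem1:
  shows "\<exists>v. nonneg_vals 3 4 v \<and> normalised 3 4 v \<and> \<not> (\<exists>p. EQ_EQ1 3 4 v p)"
proof (intro exI conjI notI)
  show "nonneg_vals 3 4 vv"
    unfolding nonneg_vals_def vv_def by (auto simp: eval_nat_numeral less_Suc_eq)
  show "normalised 3 4 vv"
    unfolding normalised_def val_def vv_def by (auto simp: eval_nat_numeral less_Suc_eq)
  assume "\<exists>p. EQ_EQ1 3 4 vv p"
  then obtain p where p: "EQ_EQ1 3 4 vv p" by blast
  define U where "U i a = val vv i (bundle_of 4 a i)" for i a
  have int: "integrable (measure_pmf p) (U i)" if "i < 3" for i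
    by (rule measure_pmf.integrable_const_bound[where B=10])
       (use U_bounds[OF that] in \<open>auto simp: U_def\<close>)
  have eq1: "measure_pmf.expectation p (U 0) = measure_pmf.expectation p (U 1)"
   and eq2: "measure_pmf.expectation p (U 1) = measure_pmf.expectation p (U 2)"
    using p unfolding EQ_EQ1_def U_def by auto
  have "1 \<le> measure_pmf.expectation p (\<lambda>a. 5 * U 0 a - 9 * U 1 a + 4 * U 2 a)"
  proof (rule measure_pmf.integral_ge_const)
    show "integrable (measure_pmf p) (\<lambda>a. 5 * U 0 a - 9 * U 1 a + 4 * U 2 a)"
      using int[of 0] int[of 1] int[of 2] by auto
    show "AE a in measure_pmf p. 1 \<le> 5 * U 0 a - 9 * U 1 a + 4 * U 2 a"
      unfolding AE_measure_pmf_iff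
    proof
      fix a assume "a \<in> set_pmf p"
      then have "is_alloc 3 4 a" "EQ1 3 4 vv a" using p unfolding EQ_EQ1_def by auto
      from key[OF this] show "1 \<le> 5 * U 0 a - 9 * U 1 a + 4 * U 2 a" unfolding U_def .
    qed
  qed
  also have "\<dots> = 5 * measure_pmf.expectation p (U 0) - 9 * measure_pmf.expectation p (U 1)
      + 4 * measure_pmf.expectation p (U 2)"
    using int[of 0] int[of 1] int[of 2] by simp
  also have "\<dots> = 0" using eq1 eq2 by simp
  finally show False by simp
qed

end
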